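(* Let $S$ be a monoid and $A$ an $S$-act. Then: (a) for each $n\in\mathbb N$, $a\mapsto[a]$ embeds $A$ into $A^n_1$ and into $A^{\aleph_0}_1$, and with the natural identifications $A^i_1\subseteq A^j_1$ for $i\le j$ and $A^{\aleph_0}_1=\bigcup_{n}A^n_1$; (b) every finite consistent set of equations over $A$ in $m$ variables has a solution in $A^m_1$, hence in $A^n_1$ for every $n\ge m$ and in $A^{\aleph_0}_1$; (c) $A$ is $n$-absolutely pure if and only if $A$ is a retract of $A^n_1$, and $A$ is absolutely pure if and only if $A$ is a retract of $A^{\aleph_0}_1$.
   Context: A (right) $S$-act is a set with an action $(a,s)\mapsto as$ with $a1=a$, $a(st)=(as)t$. Equations over $A$ with variables from a set have the forms $xs=yt$, $xs=xt$, $xs=a$ ($a\in A$); a solution in $B\supseteq A$ is a family in $B$ satisfying them; a set is consistent if it has a solution in some $S$-act containing $A$. $A$ is $n$-absolutely pure if every finite consistent set of equations over $A$ in at most $n$ variables has a solution in $A$; absolutely pure if this holds for all $n$; a retract of $B\supseteq A$ if there is an $S$-morphism $B\to A$ fixing $A$ pointwise. For a set $\Sigma$ of equations, $v(\Sigma)$ is the number of variables occurring in it and $H(\Sigma)=\{(xu,yv):xu=yv\in\Sigma\}$, $K(\Sigma)=\{(xs,a):xs=a\in\Sigma\}$. Canonical first step: let $\Theta(A,m)$ be the collection of all finite consistent sets of equations $\Sigma$ over $A$ with $v(\Sigma)=m$, where variables are chosen so that distinct members of $\bigcup_m\Theta(A,m)$ use pairwise disjoint sets of variables. Let $\Omega_n$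 be the set of all variables occurring in members of $\bigcup_{1\le m\le n}\Theta(A,m)$ and $\Omega_{\aleph_0}=\bigcup_n\Omega_n$. Define $A^n_1=(A\sqcup F_S(\Omega_n))/\kappa(n)$ and $A^{\aleph_0}_1=(A\sqcup F_S(\Omega_{\aleph_0}))/\kappa(\aleph_0)$, where $F_S(\cdot)$ is the free $S$-act, $\kappa(n)$ is the congruence generated by $\bigcup\{H(\Sigma)\cup K(\Sigma):\Sigma\in\Theta(A,m),1\le m\le n\}$, and $\kappa(\aleph_0)$ that generated by $\bigcup\{H(\Sigma)\cup K(\Sigma):\Sigma\in\bigcup_m\Theta(A,m)\}$. *)

theory Defs
  imports Main
begin

definition is_act :: "'b set \<Rightarrow> ('b \<Rightarrow> 's::monoid_mult \<Rightarrow> 'b) \<Rightarrow> bool" where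
  "is_act B act \<longleftrightarrow> (\<forall>b\<in>B. \<forall>s. act b s \<in> B) \<and> (\<forall>b\<in>B. act b 1 = b)
     \<and> (\<forall>b\<in>B. \<forall>s t. act b (s * t) = act (act b s) t)"

definition is_morph :: "'a set \<Rightarrow> ('a \<Rightarrow> 's::monoid_mult \<Rightarrow> 'a) \<Rightarrow> 'b set \<Rightarrow> ('b \<Rightarrow> 's \<Rightarrow> 'b)
    \<Rightarrow> ('a \<Rightarrow> 'b) \<Rightarrow> bool" where
  "is_morph A actA B actB f \<longleftrightarrow> (\<forall>a\<in>A. f a \<in> B) \<and> (\<forall>a\<in>A. \<forall>s. f (actA a s) = actB (f a) s)"

definition is_retract :: "'a set \<Rightarrow> ('a \<Rightarrow> 's::monoid_mult \<Rightarrow> 'a) \<Rightarrow> 'b set \<Rightarrow> ('b \<Rightarrow> 's \<Rightarrow> 'b)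
    \<Rightarrow> ('a \<Rightarrow> 'b) \<Rightarrow> bool" where
  "is_retract A actA B actB e \<longleftrightarrow> (\<exists>r. is_morph B actB A actA r \<and> (\<forall>a\<in>A. r (e a) = a))"

text \<open>EqVV x s y t is xs = yt (with x = y allowed, giving xs = xt); EqVC x s a is xs = a.\<close>
datatype ('v, 's, 'a) eqn = EqVV 'v 's 'v 's | EqVC 'v 's 'a

fun eqn_vars :: "('v, 's, 'a) eqn \<Rightarrow> 'v set" where
  "eqn_vars (EqVV x s y t) = {x, y}"
| "eqn_vars (EqVC x s a) = {x}"

definition vars :: "('v, 's, 'a) eqn set \<Rightarrow> 'v set" where
  "vars \<Sigma> = \<Union> (eqn_vars ` \<Sigma>)"

definition eqns_over :: "'a set \<Rightarrow> ('v, 's, 'a) eqn set \<Rightarrow> bool" where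
  "eqns_over A \<Sigma> \<longleftrightarrow> (\<forall>x s a. EqVC x s a \<in> \<Sigma> \<longrightarrow> a \<in> A)"

definition solves :: "('b \<Rightarrow> 's \<Rightarrow> 'b) \<Rightarrow> ('a \<Rightarrow> 'b) \<Rightarrow> ('v \<Rightarrow> 'b) \<Rightarrow> ('v, 's, 'a) eqn set \<Rightarrow> bool" where
  "solves actB e f \<Sigma> \<longleftrightarrow>
     (\<forall>x s y t. EqVV x s y t \<in> \<Sigma> \<longrightarrow> actB (f x) s = actB (f y) t)
   \<and> (\<forall>x s a. EqVC x s a \<in> \<Sigma> \<longrightarrow> actB (f x) s = e a)"

definition solution_in :: "'b set \<Rightarrow> ('b \<Rightarrow> 's \<Rightarrow> 'b) \<Rightarrow> ('a \<Rightarrow> 'b) \<Rightarrow> ('v \<Rightarrow> 'b)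
    \<Rightarrow> ('v, 's, 'a) eqn set \<Rightarrow> bool" where
  "solution_in B actB e f \<Sigma> \<longleftrightarrow> (\<forall>x\<in>vars \<Sigma>. f x \<in> B) \<and> solves actB e f \<Sigma>"

text \<open>The containing act is taken on the type 'a + 'v \<times> 's, which is large enough: the
  sub-act generated by A and the solution values always injects into it.\<close>
definition consistent :: "'a set \<Rightarrow> ('a \<Rightarrow> 's::monoid_mult \<Rightarrow> 'a) \<Rightarrow> ('v, 's, 'a) eqn set \<Rightarrow> bool" where
  "consistent A act \<Sigma> \<longleftrightarrow> eqns_over A \<Sigma> \<and>
     (\<exists>(B :: ('a + 'v \<times> 's) set) actB e f.
        is_act B actB \<and> is_morph A act B actB e \<and> inj_on e A \<and> solution_in B actB e f \<Sigma>)"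

text \<open>n-absolute purity (variables renamed into nat; finite systems lose nothing).\<close>
definition n_abs_pure :: "'a set \<Rightarrow> ('a \<Rightarrow> 's::monoid_mult \<Rightarrow> 'a) \<Rightarrow> nat \<Rightarrow> bool" where
  "n_abs_pure A act n \<longleftrightarrow> (\<forall>\<Sigma> :: (nat, 's, 'a) eqn set.
     finite \<Sigma> \<and> consistent A act \<Sigma> \<and> card (vars \<Sigma>) \<le> n \<longrightarrow> (\<exists>f. solution_in A act id f \<Sigma>))"

definition abs_pure :: "'a set \<Rightarrow> ('a \<Rightarrow> 's::monoid_mult \<Rightarrow> 'a) \<Rightarrow> bool" where
  "abs_pure A act \<longleftrightarrow> (\<forall>n. n_abs_pure A act n)"

type_synonym ('s, 'a) sys = "(nat, 's, 'a) eqn set"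
text \<open>A variable of the canonical construction is a pair (\<Sigma>, x): variable x tagged by its
  system, which makes variable sets of distinct systems disjoint.\<close>
type_synonym ('s, 'a) cvar = "('s, 'a) sys \<times> nat"
type_synonym ('s, 'a) celt = "'a + (('s, 'a) cvar \<times> 's)"

definition Theta :: "'a set \<Rightarrow> ('a \<Rightarrow> 's::monoid_mult \<Rightarrow> 'a) \<Rightarrow> nat \<Rightarrow> ('s, 'a) sys set" where
  "Theta A act m = {\<Sigma>. finite \<Sigma> \<and> consistent A act \<Sigma> \<and> card (vars \<Sigma>) = m}"

definition Omega :: "('s, 'a) sys set \<Rightarrow> ('s, 'a) cvar set" where
  "Omega Ss = {(\<Sigma>, x). \<Sigma> \<in> Ss \<and> x \<in> vars \<Sigma>}"

definition sysn :: "'a set \<Rightarrow> ('a \<Rightarrow> 's::monoid_mult \<Rightarrow> 'a) \<Rightarrow> nat \<Rightarrow> ('s, 'a) sys set" where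
  "sysn A act n = (\<Union>m\<in>{1..n}. Theta A act m)"

definition sysinf :: "'a set \<Rightarrow> ('a \<Rightarrow> 's::monoid_mult \<Rightarrow> 'a) \<Rightarrow> ('s, 'a) sys set" where
  "sysinf A act = (\<Union>m. Theta A act m)"

text \<open>Carrier and action of A \<squnion> F_S(\<Omega>); the free act F_S(\<Omega>) is \<Omega> \<times> S with (w,t)s = (w,ts).\<close>
definition ccar :: "'a set \<Rightarrow> ('s, 'a) cvar set \<Rightarrow> ('s::monoid_mult, 'a) celt set" where
  "ccar A \<Omega> = Inl ` A \<union> Inr ` (\<Omega> \<times> UNIV)"

definition cact :: "('a \<Rightarrow> 's::monoid_mult \<Rightarrow> 'a) \<Rightarrow> ('s, 'a) celt \<Rightarrow> 's \<Rightarrow> ('s, 'a) celt" where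
  "cact act z s = (case z of Inl a \<Rightarrow> Inl (act a s) | Inr (w, t) \<Rightarrow> Inr (w, t * s))"

definition gens :: "('s, 'a) sys set \<Rightarrow> (('s, 'a) celt \<times> ('s, 'a) celt) set" where
  "gens Ss = {(Inr ((\<Sigma>, x), u), Inr ((\<Sigma>, y), v)) | \<Sigma> x u y v. \<Sigma> \<in> Ss \<and> EqVV x u y v \<in> \<Sigma>}
           \<union> {(Inr ((\<Sigma>, x), s), Inl a) | \<Sigma> x s a. \<Sigma> \<in> Ss \<and> EqVC x s a \<in> \<Sigma>}"

inductive_set cong_gen :: "'x set \<Rightarrow> ('x \<Rightarrow> 's \<Rightarrow> 'x) \<Rightarrow> ('x \<times> 'x) set \<Rightarrow> ('x \<times> 'x) set"
  for X act R where
  base: "p \<in> R \<Longrightarrow> p \<in> cong_gen X act R"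
| refl: "x \<in> X \<Longrightarrow> (x, x) \<in> cong_gen X act R"
| sym: "(x, y) \<in> cong_gen X act R \<Longrightarrow> (y, x) \<in> cong_gen X act R"
| trans: "(x, y) \<in> cong_gen X act R \<Longrightarrow> (y, z) \<in> cong_gen X act R \<Longrightarrow> (x, z) \<in> cong_gen X act R"
| comp: "(x, y) \<in> cong_gen X act R \<Longrightarrow> (act x s, act y s) \<in> cong_gen X act R"

definition quot_act :: "('x \<times> 'x) set \<Rightarrow> ('x \<Rightarrow> 's \<Rightarrow> 'x) \<Rightarrow> 'x set \<Rightarrow> 's \<Rightarrow> 'x set" where
  "quot_act \<kappa> act c s = \<kappa> `` ((\<lambda>x. act x s) ` c)"

definition kappan where
  "kappan A act n = cong_gen (ccar A (Omega (sysn A act n))) (cact act) (gens (sysn A act n))"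
definition A1n_car where
  "A1n_car A act n = ccar A (Omega (sysn A act n)) // kappan A act n"
definition A1n_act where
  "A1n_act A act n = quot_act (kappan A act n) (cact act)"
definition embn where
  "embn A act n a = kappan A act n `` {Inl a}"

definition kappainf where
  "kappainf A act = cong_gen (ccar A (Omega (sysinf A act))) (cact act) (gens (sysinf A act))"
definition A1inf_car where
  "A1inf_car A act = ccar A (Omega (sysinf A act)) // kappainf A act"
definition A1inf_act where
  "A1inf_act A act = quot_act (kappainf A act) (cact act)"
definition embinf where
  "embinf A act a = kappainf A act `` {Inl a}"

definition iota where "iota A act j c = kappan A act j `` c"
definition iotainf where "iotainf A act c = kappainf A act `` c"

end

theory Submission
  imports Defs
begin



lemma cact_closed: "is_act A act \<Longrightarrow> z \<in> ccar A \<Omega> \<Longrightarrow> cact act z s \<in> ccar A \<Omega>"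
  by (auto simp: ccar_def cact_def is_act_def)

lemma is_act_ccar: "is_act A act \<Longrightarrow> is_act (ccar A \<Omega>) (cact act)"
  unfolding is_act_def ccar_def cact_def by (auto simp: mult.assoc)

lemma cong_gen_subset:
  assumes "R \<subseteq> X \<times> X" "\<And>x s. x \<in> X \<Longrightarrow> act x s \<in> X"
  shows "cong_gen X act R \<subseteq> X \<times> X"
proof
  fix p assume "p \<in> cong_gen X act R"
  then show "p \<in> X \<times> X"
  proof (induction rule: cong_gen.induct)
    case (base p) then show ?case using assms(1) by blast
  next
    case (comp x y s) then show ?case using assms(2) by blast
  qed auto
qed

lemma cong_gen_equiv:
  assumes "R \<subseteq> X \<times> X" "\<And>x s. x \<in> X \<Longrightarrow> act x s \<in> X"
  shows "equiv X (cong_gen X act R)"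
proof (rule equivI)
  show "cong_gen X act R \<subseteq> X \<times> X" by (rule cong_gen_subset[OF assms])
  show "refl_on X (cong_gen X act R)" unfolding refl_on_def by (blast intro: cong_gen.refl)
  show "sym (cong_gen X act R)" unfolding sym_def by (blast intro: cong_gen.sym)
  show "trans (cong_gen X act R)" unfolding trans_def by (blast intro: cong_gen.trans)
qed

lemma cong_gen_kernel:
  assumes sub: "cong_gen X act R \<subseteq> X \<times> X" and gen: "\<And>p q. (p,q)\<in>R \<Longrightarrow> \<phi> p = \<phi> q"
    and hom: "\<And>z s. z\<in>X \<Longrightarrow> \<phi> (act z s) = G (\<phi> z) s"
    and zw: "(z,w) \<in> cong_gen X act R"
  shows "\<phi> z = \<phi> w"
proof -
  have "p \<in> cong_gen X act R \<Longrightarrow> \<phi> (fst p) = \<phi> (snd p)" for p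
  proof (induction rule: cong_gen.induct)
    case (base p) then show ?case using gen by (cases p) auto
  next
    case (comp x y s)
    then have "x \<in> X" "y \<in> X" using sub by auto
    then show ?case using comp hom by simp
  qed auto
  from this[OF zw] show ?thesis by simp
qed

lemma quot_act_class:
  assumes "equiv X K" "x \<in> X" "\<And>x y s. (x,y) \<in> K \<Longrightarrow> (act x s, act y s) \<in> K"
  shows "quot_act K act (K``{x}) s = K``{act x s}"
proof -
  have "K``{act y s} = K``{act x s}" if "(x,y) \<in> K" for y
    using equiv_class_eq[OF assms(1) assms(3)[OF that]] by simp
  note h1 = this
  have h2: "(x,x) \<in> K" using assms(1,2) by (simp add: equiv_def refl_on_def)
  show ?thesis unfolding quot_act_def
  proof (rule set_eqI, rule iffI)
    fix z assume "z \<in> K `` ((\<lambda>y. act y s) ` (K``{x}))"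
    then obtain y where y: "(x,y) \<in> K" "(act y s, z) \<in> K" by blast
    then show "z \<in> K``{act x s}" using h1[OF y(1)] by blast
  next
    fix z assume "z \<in> K``{act x s}"
    then show "z \<in> K `` ((\<lambda>y. act y s) ` (K``{x}))" using h2 by blast
  qed
qed




definition Kap where "Kap A act Ss = cong_gen (ccar A (Omega Ss)) (cact act) (gens Ss)"
definition good where "good A act Ss \<longleftrightarrow> (\<forall>\<Sigma>\<in>Ss. consistent A act \<Sigma>)"

lemma vars_mem: "EqVV x u y v \<in> \<Sigma> \<Longrightarrow> x \<in> vars \<Sigma> \<and> y \<in> vars \<Sigma>"
  "EqVC x s a \<in> \<Sigma> \<Longrightarrow> x \<in> vars \<Sigma>"
  unfolding vars_def by force+

lemma gens_VV: "\<Sigma> \<in> Ss \<Longrightarrow> EqVV x u y v \<in> \<Sigma> \<Longrightarrow> (Inr ((\<Sigma>, x), u), Inr ((\<Sigma>, y), v)) \<in> gens Ss"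
  unfolding gens_def by auto
lemma gens_VC: "\<Sigma> \<in> Ss \<Longrightarrow> EqVC x s a \<in> \<Sigma> \<Longrightarrow> (Inr ((\<Sigma>, x), s), Inl a) \<in> gens Ss"
  unfolding gens_def by auto

lemma gens_sub:
  assumes "good A act Ss"
  shows "gens Ss \<subseteq> ccar A (Omega Ss) \<times> ccar A (Omega Ss)"
proof
  fix p assume "p \<in> gens Ss"
  then show "p \<in> ccar A (Omega Ss) \<times> ccar A (Omega Ss)"
    unfolding gens_def
  proof (elim UnE CollectE exE conjE)
    fix \<Sigma> x u y v assume "p = (Inr ((\<Sigma>, x), u), Inr ((\<Sigma>, y), v))" "\<Sigma> \<in> Ss" "EqVV x u y v \<in> \<Sigma>"
    moreover then have "((\<Sigma>, x), u) \<in> Omega Ss \<times> UNIV" "((\<Sigma>, y), v) \<in> Omega Ss \<times> UNIV"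
      using vars_mem(1)[of x u y v \<Sigma>] by (auto simp: Omega_def)
    ultimately show ?thesis unfolding ccar_def by blast
  next
    fix \<Sigma> x s a assume "p = (Inr ((\<Sigma>, x), s), Inl a)" "\<Sigma> \<in> Ss" "EqVC x s a \<in> \<Sigma>"
    moreover then have "a \<in> A" using assms by (auto simp: good_def consistent_def eqns_over_def)
    moreover have "((\<Sigma>, x), s) \<in> Omega Ss \<times> UNIV"
      using calculation vars_mem(2) by (auto simp: Omega_def)
    ultimately show ?thesis unfolding ccar_def by blast
  qed
qed

lemma Kap_sub: "is_act A act \<Longrightarrow> good A act Ss \<Longrightarrow> Kap A act Ss \<subseteq> ccar A (Omega Ss) \<times> ccar A (Omega Ss)"
  unfolding Kap_def by (rule cong_gen_subset[OF gens_sub]) (auto intro: cact_closed)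

lemma Kap_equiv: "is_act A act \<Longrightarrow> good A act Ss \<Longrightarrow> equiv (ccar A (Omega Ss)) (Kap A act Ss)"
  unfolding Kap_def by (rule cong_gen_equiv[OF gens_sub]) (auto intro: cact_closed)

lemma Kap_comp: "(x,y) \<in> Kap A act Ss \<Longrightarrow> (cact act x s, cact act y s) \<in> Kap A act Ss"
  unfolding Kap_def by (rule cong_gen.comp)

lemma Kap_qa: "is_act A act \<Longrightarrow> good A act Ss \<Longrightarrow> x \<in> ccar A (Omega Ss) \<Longrightarrow>
   quot_act (Kap A act Ss) (cact act) (Kap A act Ss``{x}) s = Kap A act Ss``{cact act x s}"
  by (rule quot_act_class[OF Kap_equiv]) (auto intro: Kap_comp)

lemma ccar_mono: "Ss0 \<subseteq> Ss \<Longrightarrow> ccar A (Omega Ss0) \<subseteq> ccar A (Omega Ss)"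
  unfolding ccar_def Omega_def by auto

lemma gens_mono: "Ss0 \<subseteq> Ss \<Longrightarrow> gens Ss0 \<subseteq> gens Ss"
  unfolding gens_def by (intro Un_mono Collect_mono allI impI; elim exE conjE; intro exI conjI; assumption?; blast)

lemma Kap_mono:
  assumes "Ss0 \<subseteq> Ss"
  shows "Kap A act Ss0 \<subseteq> Kap A act Ss"
proof
  fix p assume "p \<in> Kap A act Ss0"
  then show "p \<in> Kap A act Ss" unfolding Kap_def
  proof (induction rule: cong_gen.induct)
    case (base p) then show ?case using gens_mono[OF assms] by (blast intro: cong_gen.base)
  next
    case (refl x) then show ?case using ccar_mono[OF assms] by (blast intro: cong_gen.refl)
  qed (blast intro: cong_gen.intros)+
qed

lemma Kap_empty: "Kap A act {} \<subseteq> Id"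
proof
  fix p assume "p \<in> Kap A act {}"
  then show "p \<in> Id" unfolding Kap_def
    by (induction rule: cong_gen.induct) (auto simp: gens_def)
qed

lemma ccar_empty: "ccar A (Omega {}) = Inl ` A"
  unfolding ccar_def Omega_def by auto

lemma Kap_emb_inj:
  assumes "is_act A act" "good A act Ss" "a \<in> A" "b \<in> A"
    and restr: "Kap A act Ss \<inter> (ccar A (Omega {}) \<times> ccar A (Omega {})) \<subseteq> Kap A act {}"
    and eq: "Kap A act Ss``{Inl a} = Kap A act Ss``{Inl b}"
  shows "a = b"
proof -
  have "Inl a \<in> ccar A (Omega Ss)" "Inl b \<in> ccar A (Omega Ss)" using assms(3,4) by (auto simp: ccar_def)
  then have "(Inl a, Inl b) \<in> Kap A act Ss" using eq eq_equiv_class_iff[OF Kap_equiv[OF assms(1,2)]] by blast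
  then have "(Inl a, Inl b) \<in> Kap A act {}" using restr assms(3,4) ccar_empty by blast
  then show ?thesis using Kap_empty by blast
qed




lemma ccar_Inr[simp]: "Inr ((\<Sigma>, x), t) \<in> ccar A (Omega Ss) \<longleftrightarrow> \<Sigma> \<in> Ss \<and> x \<in> vars \<Sigma>"
  unfolding ccar_def Omega_def by auto
lemma ccar_Inl[simp]: "Inl a \<in> ccar A \<Omega> \<longleftrightarrow> a \<in> A"
  unfolding ccar_def by auto
lemma cact_simps[simp]: "cact act (Inl a) s = Inl (act a s)" "cact act (Inr (w, t)) s = Inr (w, t * s)"
  unfolding cact_def by auto

definition wit :: "'a set \<Rightarrow> ('a \<Rightarrow> 's::monoid_mult \<Rightarrow> 'a) \<Rightarrow> ('v,'s,'a) eqn set \<Rightarrow>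
   ('a + 'v \<times> 's) set \<times> (('a + 'v \<times> 's) \<Rightarrow> 's \<Rightarrow> ('a + 'v \<times> 's)) \<times> ('a \<Rightarrow> 'a + 'v \<times> 's) \<times> ('v \<Rightarrow> 'a + 'v \<times> 's)"
  where "wit A act \<Sigma> = (SOME w. case w of (B, aB, e, f) \<Rightarrow>
     is_act B aB \<and> is_morph A act B aB e \<and> inj_on e A \<and> solution_in B aB e f \<Sigma>)"

lemma wit_props:
  fixes \<Sigma> :: "('v,'s::monoid_mult,'a) eqn set"
  assumes "consistent A act \<Sigma>"
  shows "is_act (fst (wit A act \<Sigma>)) (fst (snd (wit A act \<Sigma>)))
   \<and> is_morph A act (fst (wit A act \<Sigma>)) (fst (snd (wit A act \<Sigma>))) (fst (snd (snd (wit A act \<Sigma>))))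
   \<and> inj_on (fst (snd (snd (wit A act \<Sigma>)))) A
   \<and> solution_in (fst (wit A act \<Sigma>)) (fst (snd (wit A act \<Sigma>))) (fst (snd (snd (wit A act \<Sigma>)))) (snd (snd (snd (wit A act \<Sigma>)))) \<Sigma>"
proof -
  from assms obtain B :: "('a + 'v \<times> 's) set" and aB e f where h: "is_act B aB \<and> is_morph A act B aB e \<and> inj_on e A \<and> solution_in B aB e f \<Sigma>"
    unfolding consistent_def by blast
  let ?P = "\<lambda>w. case w of (B, aB, e, f) \<Rightarrow>
     is_act B aB \<and> is_morph A act B aB e \<and> inj_on e A \<and> solution_in B aB e f \<Sigma>"
  have "?P (B, aB, e, f)" using h by simp
  then have "?P (wit A act \<Sigma>)" unfolding wit_def by (rule someI)
  then show ?thesis by (cases "wit A act \<Sigma>") auto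
qed

definition "wB A act \<Sigma> = fst (wit A act \<Sigma>)"
definition "wa A act \<Sigma> = fst (snd (wit A act \<Sigma>))"
definition "we A act \<Sigma> = fst (snd (snd (wit A act \<Sigma>)))"
definition "wF A act \<Sigma> = snd (snd (snd (wit A act \<Sigma>)))"

lemma W:
  fixes \<Sigma> :: "('v,'s::monoid_mult,'a) eqn set"
  assumes "consistent A act \<Sigma>"
  shows "is_act (wB A act \<Sigma>) (wa A act \<Sigma>) \<and> is_morph A act (wB A act \<Sigma>) (wa A act \<Sigma>) (we A act \<Sigma>) \<and> inj_on (we A act \<Sigma>) A
     \<and> solution_in (wB A act \<Sigma>) (wa A act \<Sigma>) (we A act \<Sigma>) (wF A act \<Sigma>) \<Sigma>"
  unfolding wB_def wa_def we_def wF_def by (rule wit_props[OF assms])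




lemma Kap_restrict:
  fixes act :: "'a \<Rightarrow> 's::monoid_mult \<Rightarrow> 'a"
  assumes act: "is_act A act" and gd: "good A act Ss" and sub: "Ss0 \<subseteq> Ss"
  shows "Kap A act Ss \<inter> (ccar A (Omega Ss0) \<times> ccar A (Omega Ss0)) \<subseteq> Kap A act Ss0"
proof -
  define X0 where "X0 = ccar A (Omega Ss0)"
  define X where "X = ccar A (Omega Ss)"
  define K0 where "K0 = Kap A act Ss0"
  have gd0: "good A act Ss0" using gd sub unfolding good_def by blast
  have eqv0: "equiv X0 K0" unfolding X0_def K0_def by (rule Kap_equiv[OF act gd0])
  have Wp: "is_act (wB A act \<Sigma>) (wa A act \<Sigma>) \<and> is_morph A act (wB A act \<Sigma>) (wa A act \<Sigma>) (we A act \<Sigma>) \<and> inj_on (we A act \<Sigma>) A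
     \<and> solution_in (wB A act \<Sigma>) (wa A act \<Sigma>) (we A act \<Sigma>) (wF A act \<Sigma>) \<Sigma>" if "\<Sigma> \<in> Ss" for \<Sigma>
    using W[of A act \<Sigma>] gd that unfolding good_def by blast
  define H where "H \<Sigma> b = (if b \<in> we A act \<Sigma> ` A then Inl (K0``{Inl (inv_into A (we A act \<Sigma>) b)}) else Inr (\<Sigma>, b))" for \<Sigma> :: "(nat,'s,'a) eqn set" and b
  define \<psi> where "\<psi> z = (if z \<in> X0 then Inl (K0``{z}) else
     (case z of Inl a \<Rightarrow> Inr undefined | Inr (w, t) \<Rightarrow> H (fst w) (wa A act (fst w) (wF A act (fst w) (snd w)) t)))" for z
  define G where "G v s = (case v of Inl c \<Rightarrow> Inl (quot_act K0 (cact act) c s) | Inr (\<Sigma>, b) \<Rightarrow>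
      H \<Sigma> (wa A act \<Sigma> b s))" for v s
  have \<psi>1: "z \<in> X0 \<Longrightarrow> \<psi> z = Inl (K0``{z})" for z unfolding \<psi>_def by simp
  have \<psi>2: "Inr ((\<Sigma>, x), t) \<notin> X0 \<Longrightarrow> \<psi> (Inr ((\<Sigma>, x), t)) = H \<Sigma> (wa A act \<Sigma> (wF A act \<Sigma> x) t)" for \<Sigma> x t
    unfolding \<psi>_def by simp
  have G1: "G (Inl c) s = Inl (quot_act K0 (cact act) c s)" for c s unfolding G_def by simp
  have G2: "G (Inr (\<Sigma>, b)) s = H \<Sigma> (wa A act \<Sigma> b s)" for \<Sigma> b s unfolding G_def by simp
  have Hin: "H \<Sigma> (we A act \<Sigma> a) = Inl (K0``{Inl a})" if "a \<in> A" "\<Sigma> \<in> Ss" for \<Sigma> a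
  proof -
    have "inv_into A (we A act \<Sigma>) (we A act \<Sigma> a) = a" using Wp[OF that(2)] that(1) by (simp add: inv_into_f_f)
    then show ?thesis unfolding H_def using that(1) by auto
  qed
  have hom: "\<psi> (cact act z s) = G (\<psi> z) s" if zX: "z \<in> X" for z s
  proof (cases "z \<in> X0")
    case True
    then have "cact act z s \<in> X0" using cact_closed[OF act] unfolding X0_def by blast
    then show ?thesis using True Kap_qa[OF act gd0, of z s] \<psi>1 G1 unfolding X0_def K0_def by simp
  next
    case False
    then obtain \<Sigma> x t where z: "z = Inr ((\<Sigma>, x), t)" using zX unfolding X_def X0_def
      by (cases z) auto
    have \<Sigma>: "\<Sigma> \<in> Ss" "x \<in> vars \<Sigma>" "\<Sigma> \<notin> Ss0" using zX False unfolding z X_def X0_def by auto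
    note W\<Sigma> = Wp[OF \<Sigma>(1)]
    have fx: "wF A act \<Sigma> x \<in> wB A act \<Sigma>" using W\<Sigma> \<Sigma>(2) unfolding solution_in_def by blast
    have ass: "wa A act \<Sigma> (wF A act \<Sigma> x) (t * s) = wa A act \<Sigma> (wa A act \<Sigma> (wF A act \<Sigma> x) t) s"
      using W\<Sigma> fx unfolding is_act_def by blast
    have nX0: "Inr ((\<Sigma>, x), t * s) \<notin> X0" using \<Sigma> unfolding X0_def by simp
    have e1: "\<psi> (cact act z s) = H \<Sigma> (wa A act \<Sigma> (wa A act \<Sigma> (wF A act \<Sigma> x) t) s)"
      using \<psi>2[OF nX0] ass unfolding z by simp
    have e2: "\<psi> z = H \<Sigma> (wa A act \<Sigma> (wF A act \<Sigma> x) t)" using \<psi>2 False unfolding z by simp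
    show ?thesis
    proof (cases "wa A act \<Sigma> (wF A act \<Sigma> x) t \<in> we A act \<Sigma> ` A")
      case True
      then obtain a where a: "a \<in> A" "wa A act \<Sigma> (wF A act \<Sigma> x) t = we A act \<Sigma> a" by blast
      have as: "act a s \<in> A" using act a(1) unfolding is_act_def by blast
      have m: "wa A act \<Sigma> (we A act \<Sigma> a) s = we A act \<Sigma> (act a s)" using W\<Sigma> a(1) unfolding is_morph_def by simp
      have q: "quot_act K0 (cact act) (K0``{Inl a}) s = K0``{Inl (act a s)}"
        using Kap_qa[OF act gd0, of "Inl a" s] a(1) unfolding K0_def by simp
      show ?thesis using e1 e2 a m q Hin[OF a(1) \<Sigma>(1)] Hin[OF as \<Sigma>(1)] G1 by simp
    next
      case nt: False
      then have "H \<Sigma> (wa A act \<Sigma> (wF A act \<Sigma> x) t) = Inr (\<Sigma>, wa A act \<Sigma> (wF A act \<Sigma> x) t)"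
        unfolding H_def by simp
      then show ?thesis using e1 e2 G2 by simp
    qed
  qed
  have gen: "\<psi> p = \<psi> q" if pq: "(p, q) \<in> gens Ss" for p q
  proof -
    from pq show ?thesis unfolding gens_def
    proof (elim UnE CollectE exE conjE)
      fix \<Sigma> x u y v assume e: "(p, q) = (Inr ((\<Sigma>, x), u), Inr ((\<Sigma>, y), v))" "\<Sigma> \<in> Ss" "EqVV x u y v \<in> \<Sigma>"
      have xy: "x \<in> vars \<Sigma>" "y \<in> vars \<Sigma>" using vars_mem(1)[OF e(3)] by auto
      show ?thesis
      proof (cases "\<Sigma> \<in> Ss0")
        case True
        then have "(p, q) \<in> gens Ss0" using e gens_VV[OF True e(3)] by simp
        then have "(p, q) \<in> K0" unfolding K0_def Kap_def by (rule cong_gen.base)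
        then have "K0``{p} = K0``{q}" by (rule equiv_class_eq[OF eqv0])
        moreover have "p \<in> X0" "q \<in> X0" using e True xy unfolding X0_def by auto
        ultimately show ?thesis using \<psi>1 by simp
      next
        case False
        have "wa A act \<Sigma> (wF A act \<Sigma> x) u = wa A act \<Sigma> (wF A act \<Sigma> y) v" using Wp[OF e(2)] e(3)
          unfolding solution_in_def solves_def by blast
        moreover have "Inr ((\<Sigma>, x), u) \<notin> X0" "Inr ((\<Sigma>, y), v) \<notin> X0" using False unfolding X0_def by auto
        ultimately show ?thesis using e(1) \<psi>2 by simp
      qed
    next
      fix \<Sigma> x s a assume e: "(p, q) = (Inr ((\<Sigma>, x), s), Inl a)" "\<Sigma> \<in> Ss" "EqVC x s a \<in> \<Sigma>"
      have x: "x \<in> vars \<Sigma>" using vars_mem(2)[OF e(3)] by auto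
      have a: "a \<in> A" using gd e unfolding good_def consistent_def eqns_over_def by blast
      show ?thesis
      proof (cases "\<Sigma> \<in> Ss0")
        case True
        then have "(p, q) \<in> gens Ss0" using e gens_VC[OF True e(3)] by simp
        then have "(p, q) \<in> K0" unfolding K0_def Kap_def by (rule cong_gen.base)
        then have "K0``{p} = K0``{q}" by (rule equiv_class_eq[OF eqv0])
        moreover have "p \<in> X0" "q \<in> X0" using e True x a unfolding X0_def by auto
        ultimately show ?thesis using \<psi>1 by simp
      next
        case False
        have b: "wa A act \<Sigma> (wF A act \<Sigma> x) s = we A act \<Sigma> a" using Wp[OF e(2)] e(3)
          unfolding solution_in_def solves_def by blast
        have "Inr ((\<Sigma>, x), s) \<notin> X0" "Inl a \<in> X0" using False a unfolding X0_def by auto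
        then show ?thesis using e(1) b \<psi>1 \<psi>2 Hin[OF a e(2)] by simp
      qed
    qed
  qed
  show ?thesis
  proof
    fix p assume p: "p \<in> Kap A act Ss \<inter> (ccar A (Omega Ss0) \<times> ccar A (Omega Ss0))"
    obtain z w where zw: "p = (z, w)" by (cases p)
    have k: "(z, w) \<in> cong_gen X (cact act) (gens Ss)" using p zw unfolding Kap_def X_def by simp
    have s: "cong_gen X (cact act) (gens Ss) \<subseteq> X \<times> X" using Kap_sub[OF act gd] unfolding Kap_def X_def .
    have "\<psi> z = \<psi> w" by (rule cong_gen_kernel[of X "cact act" "gens Ss" \<psi> G, OF s gen hom k])
    moreover have "z \<in> X0" "w \<in> X0" using p zw unfolding X0_def by auto
    ultimately have "K0``{z} = K0``{w}" using \<psi>1 by simp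
    then show "p \<in> Kap A act Ss0" using eq_equiv_class_iff[OF eqv0] \<open>z \<in> X0\<close> \<open>w \<in> X0\<close> zw
      unfolding K0_def by blast
  qed
qed




context
  fixes A :: "'a set" and act :: "'a \<Rightarrow> 's::monoid_mult \<Rightarrow> 'a"
  assumes act: "is_act A act"
begin

lemma quot_is_act:
  assumes gd: "good A act Ss"
  shows "is_act (ccar A (Omega Ss) // Kap A act Ss) (quot_act (Kap A act Ss) (cact act))"
  unfolding is_act_def
proof (intro conjI ballI allI)
  fix c s assume "c \<in> ccar A (Omega Ss) // Kap A act Ss"
  then obtain x where x: "x \<in> ccar A (Omega Ss)" "c = Kap A act Ss``{x}" by (auto elim: quotientE)
  show "quot_act (Kap A act Ss) (cact act) c s \<in> ccar A (Omega Ss) // Kap A act Ss"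
    using Kap_qa[OF act gd x(1)] x cact_closed[OF act x(1)] by (simp add: quotientI)
next
  fix c assume "c \<in> ccar A (Omega Ss) // Kap A act Ss"
  then obtain x where x: "x \<in> ccar A (Omega Ss)" "c = Kap A act Ss``{x}" by (auto elim: quotientE)
  have "cact act x 1 = x" using is_act_ccar[OF act] x(1) unfolding is_act_def by blast
  then show "quot_act (Kap A act Ss) (cact act) c 1 = c" using Kap_qa[OF act gd x(1)] x by simp
next
  fix c s t assume "c \<in> ccar A (Omega Ss) // Kap A act Ss"
  then obtain x where x: "x \<in> ccar A (Omega Ss)" "c = Kap A act Ss``{x}" by (auto elim: quotientE)
  have "cact act x (s * t) = cact act (cact act x s) t" using is_act_ccar[OF act] x(1) unfolding is_act_def by blast
  then show "quot_act (Kap A act Ss) (cact act) c (s * t) =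
       quot_act (Kap A act Ss) (cact act) (quot_act (Kap A act Ss) (cact act) c s) t"
    using Kap_qa[OF act gd x(1)] Kap_qa[OF act gd cact_closed[OF act x(1)]] x by simp
qed

lemma emb_morph:
  assumes gd: "good A act Ss"
  shows "is_morph A act (ccar A (Omega Ss) // Kap A act Ss) (quot_act (Kap A act Ss) (cact act))
     (\<lambda>a. Kap A act Ss``{Inl a})"
  unfolding is_morph_def
proof (intro conjI ballI allI)
  fix a assume a: "a \<in> A"
  then show "Kap A act Ss``{Inl a} \<in> ccar A (Omega Ss) // Kap A act Ss" by (simp add: quotientI)
  fix s show "Kap A act Ss``{Inl (act a s)} = quot_act (Kap A act Ss) (cact act) (Kap A act Ss``{Inl a}) s"
    using Kap_qa[OF act gd, of "Inl a" s] a by simp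
qed

lemma emb_inj:
  assumes gd: "good A act Ss"
  shows "inj_on (\<lambda>a. Kap A act Ss``{Inl a}) A"
proof (rule inj_onI)
  fix a b assume "a \<in> A" "b \<in> A" "Kap A act Ss``{Inl a} = Kap A act Ss``{Inl b}"
  then show "a = b" using Kap_emb_inj[OF act gd _ _ Kap_restrict[OF act gd]] by blast
qed

lemma img_class:
  assumes gd: "good A act Ss" and sub: "Ss0 \<subseteq> Ss" and x: "x \<in> ccar A (Omega Ss0)"
  shows "Kap A act Ss``(Kap A act Ss0``{x}) = Kap A act Ss``{x}"
proof -
  have gd0: "good A act Ss0" using gd sub unfolding good_def by blast
  have e0: "equiv (ccar A (Omega Ss0)) (Kap A act Ss0)" by (rule Kap_equiv[OF act gd0])
  have e: "equiv (ccar A (Omega Ss)) (Kap A act Ss)" by (rule Kap_equiv[OF act gd])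
  have m: "Kap A act Ss0 \<subseteq> Kap A act Ss" by (rule Kap_mono[OF sub])
  have "(x, x) \<in> Kap A act Ss0" using e0 x unfolding equiv_def refl_on_def by blast
  moreover have "trans (Kap A act Ss)" using e unfolding equiv_def by blast
  ultimately show ?thesis using m unfolding trans_def by blast
qed

lemma iota_props:
  assumes gd: "good A act Ss" and sub: "Ss0 \<subseteq> Ss"
  shows "is_morph (ccar A (Omega Ss0) // Kap A act Ss0) (quot_act (Kap A act Ss0) (cact act))
                  (ccar A (Omega Ss) // Kap A act Ss) (quot_act (Kap A act Ss) (cact act)) (\<lambda>c. Kap A act Ss``c)"
    "inj_on (\<lambda>c. Kap A act Ss``c) (ccar A (Omega Ss0) // Kap A act Ss0)"
    "\<forall>a\<in>A. Kap A act Ss``(Kap A act Ss0``{Inl a}) = Kap A act Ss``{Inl a}"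
proof -
  have gd0: "good A act Ss0" using gd sub unfolding good_def by blast
  have XX: "ccar A (Omega Ss0) \<subseteq> ccar A (Omega Ss)" by (rule ccar_mono[OF sub])
  show "is_morph (ccar A (Omega Ss0) // Kap A act Ss0) (quot_act (Kap A act Ss0) (cact act))
                  (ccar A (Omega Ss) // Kap A act Ss) (quot_act (Kap A act Ss) (cact act)) (\<lambda>c. Kap A act Ss``c)"
    unfolding is_morph_def
  proof (intro conjI ballI allI)
    fix c s assume "c \<in> ccar A (Omega Ss0) // Kap A act Ss0"
    then obtain x where x: "x \<in> ccar A (Omega Ss0)" "c = Kap A act Ss0``{x}" by (auto elim: quotientE)
    have xX: "x \<in> ccar A (Omega Ss)" using x XX by blast
    show "Kap A act Ss``c \<in> ccar A (Omega Ss) // Kap A act Ss"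
      using img_class[OF gd sub x(1)] x xX by (simp add: quotientI)
    have c1: "cact act x s \<in> ccar A (Omega Ss0)" by (rule cact_closed[OF act x(1)])
    show "Kap A act Ss``(quot_act (Kap A act Ss0) (cact act) c s) = quot_act (Kap A act Ss) (cact act) (Kap A act Ss``c) s"
      using Kap_qa[OF act gd0 x(1)] Kap_qa[OF act gd xX] img_class[OF gd sub x(1)] img_class[OF gd sub c1] x
      by simp
  qed
  show "inj_on (\<lambda>c. Kap A act Ss``c) (ccar A (Omega Ss0) // Kap A act Ss0)"
  proof (rule inj_onI)
    fix c d assume c: "c \<in> ccar A (Omega Ss0) // Kap A act Ss0" and d: "d \<in> ccar A (Omega Ss0) // Kap A act Ss0"
      and eq: "Kap A act Ss``c = Kap A act Ss``d"
    obtain x where x: "x \<in> ccar A (Omega Ss0)" "c = Kap A act Ss0``{x}" using c by (auto elim: quotientE)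
    obtain y where y: "y \<in> ccar A (Omega Ss0)" "d = Kap A act Ss0``{y}" using d by (auto elim: quotientE)
    have "Kap A act Ss``{x} = Kap A act Ss``{y}" using eq x y img_class[OF gd sub] by simp
    then have "(x, y) \<in> Kap A act Ss" using eq_equiv_class_iff[OF Kap_equiv[OF act gd]] x y XX by blast
    then have "(x, y) \<in> Kap A act Ss0" using Kap_restrict[OF act gd sub] x y by blast
    then show "c = d" using x y equiv_class_eq[OF Kap_equiv[OF act gd0]] by simp
  qed
  show "\<forall>a\<in>A. Kap A act Ss``(Kap A act Ss0``{Inl a}) = Kap A act Ss``{Inl a}"
    using img_class[OF gd sub] by simp
qed

lemma iota_comp:
  assumes gd: "good A act Ss2" and s1: "Ss0 \<subseteq> Ss1" and s2: "Ss1 \<subseteq> Ss2"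
    and c: "c \<in> ccar A (Omega Ss0) // Kap A act Ss0"
  shows "Kap A act Ss2``(Kap A act Ss1``c) = Kap A act Ss2``c"
proof -
  have gd1: "good A act Ss1" using gd s2 unfolding good_def by blast
  obtain x where x: "x \<in> ccar A (Omega Ss0)" "c = Kap A act Ss0``{x}" using c by (auto elim: quotientE)
  have x1: "x \<in> ccar A (Omega Ss1)" using x ccar_mono[OF s1] by blast
  show ?thesis using img_class[OF gd1 s1 x(1)] img_class[OF gd s2 x1] img_class[OF gd order_trans[OF s1 s2] x(1)] x
    by simp
qed

lemma canon_sol:
  assumes gd: "good A act Ss" and \<Sigma>: "\<Sigma> \<in> Ss"
  shows "solution_in (ccar A (Omega Ss) // Kap A act Ss) (quot_act (Kap A act Ss) (cact act))
     (\<lambda>a. Kap A act Ss``{Inl a}) (\<lambda>x. Kap A act Ss``{Inr ((\<Sigma>, x), 1)}) \<Sigma>"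
proof -
  have q: "quot_act (Kap A act Ss) (cact act) (Kap A act Ss``{Inr ((\<Sigma>, x), 1)}) s = Kap A act Ss``{Inr ((\<Sigma>, x), s)}"
    if "x \<in> vars \<Sigma>" for x s using Kap_qa[OF act gd, of "Inr ((\<Sigma>, x), 1)" s] that \<Sigma> by simp
  have base: "(p, q) \<in> gens Ss \<Longrightarrow> Kap A act Ss``{p} = Kap A act Ss``{q}" for p q
    using equiv_class_eq[OF Kap_equiv[OF act gd]] cong_gen.base unfolding Kap_def by metis
  show ?thesis unfolding solution_in_def solves_def
  proof (intro conjI ballI allI impI)
    fix x assume "x \<in> vars \<Sigma>"
    then show "Kap A act Ss``{Inr ((\<Sigma>, x), 1)} \<in> ccar A (Omega Ss) // Kap A act Ss" using \<Sigma> by (simp add: quotientI)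
  next
    fix x s y t assume e: "EqVV x s y t \<in> \<Sigma>"
    then have "(Inr ((\<Sigma>, x), s), Inr ((\<Sigma>, y), t)) \<in> gens Ss" using \<Sigma> by (rule gens_VV[rotated])
    then show "quot_act (Kap A act Ss) (cact act) (Kap A act Ss``{Inr ((\<Sigma>, x), 1)}) s =
           quot_act (Kap A act Ss) (cact act) (Kap A act Ss``{Inr ((\<Sigma>, y), 1)}) t"
      using q vars_mem(1)[OF e] base by simp
  next
    fix x s a assume e: "EqVC x s a \<in> \<Sigma>"
    then have "(Inr ((\<Sigma>, x), s), Inl a) \<in> gens Ss" using \<Sigma> by (rule gens_VC[rotated])
    then show "quot_act (Kap A act Ss) (cact act) (Kap A act Ss``{Inr ((\<Sigma>, x), 1)}) s = Kap A act Ss``{Inl a}"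
      using q vars_mem(2)[OF e] base by simp
  qed
qed

lemma morph_sol:
  assumes "solution_in B aB e f \<Sigma>" "is_morph B aB C aC r" "\<forall>a. r (e a) = e' a"
  shows "solution_in C aC e' (r \<circ> f) \<Sigma>"
  unfolding solution_in_def solves_def
proof (intro conjI ballI allI impI)
  fix x assume "x \<in> vars \<Sigma>"
  then have "f x \<in> B" using assms(1) unfolding solution_in_def by blast
  then show "(r \<circ> f) x \<in> C" using assms(2) unfolding is_morph_def by simp
next
  fix x s y t assume e: "EqVV x s y t \<in> \<Sigma>"
  have fx: "f x \<in> B" "f y \<in> B" using vars_mem(1)[OF e] assms(1) unfolding solution_in_def by blast+
  have "aB (f x) s = aB (f y) t" using e assms(1) unfolding solution_in_def solves_def by blast
  then have "r (aB (f x) s) = r (aB (f y) t)" by simp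
  then show "aC ((r \<circ> f) x) s = aC ((r \<circ> f) y) t" using fx assms(2) unfolding is_morph_def by simp
next
  fix x s a assume e: "EqVC x s a \<in> \<Sigma>"
  have fx: "f x \<in> B" using vars_mem(2)[OF e] assms(1) unfolding solution_in_def by blast
  have "aB (f x) s = e a" using e assms(1) unfolding solution_in_def solves_def by blast
  then have "r (aB (f x) s) = r (e a)" by simp
  then show "aC ((r \<circ> f) x) s = e' a" using fx assms(2,3) unfolding is_morph_def by simp
qed

lemma retract_char:
  assumes gd: "good A act Ss"
  shows "is_retract A act (ccar A (Omega Ss) // Kap A act Ss) (quot_act (Kap A act Ss) (cact act))
     (\<lambda>a. Kap A act Ss``{Inl a}) \<longleftrightarrow> (\<forall>\<Sigma>\<in>Ss. \<exists>g. solution_in A act id g \<Sigma>)"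
proof
  assume "is_retract A act (ccar A (Omega Ss) // Kap A act Ss) (quot_act (Kap A act Ss) (cact act))
     (\<lambda>a. Kap A act Ss``{Inl a})"
  then obtain r where r: "is_morph (ccar A (Omega Ss) // Kap A act Ss) (quot_act (Kap A act Ss) (cact act)) A act r"
    "\<forall>a\<in>A. r (Kap A act Ss``{Inl a}) = a" unfolding is_retract_def by blast
  show "\<forall>\<Sigma>\<in>Ss. \<exists>g. solution_in A act id g \<Sigma>"
  proof
    fix \<Sigma> assume \<Sigma>: "\<Sigma> \<in> Ss"
    have s: "solution_in (ccar A (Omega Ss) // Kap A act Ss) (quot_act (Kap A act Ss) (cact act))
     (\<lambda>a. Kap A act Ss``{Inl a}) (\<lambda>x. Kap A act Ss``{Inr ((\<Sigma>, x), 1)}) \<Sigma>" by (rule canon_sol[OF gd \<Sigma>])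
    have "solution_in A act (\<lambda>a. r (Kap A act Ss``{Inl a})) (r \<circ> (\<lambda>x. Kap A act Ss``{Inr ((\<Sigma>, x), 1)})) \<Sigma>"
      by (rule morph_sol[OF s r(1)]) simp
    moreover have "\<forall>x s a. EqVC x s a \<in> \<Sigma> \<longrightarrow> a \<in> A" using gd \<Sigma> unfolding good_def consistent_def eqns_over_def by blast
    ultimately have "solution_in A act id (r \<circ> (\<lambda>x. Kap A act Ss``{Inr ((\<Sigma>, x), 1)})) \<Sigma>"
      using r(2) unfolding solution_in_def solves_def by auto
    then show "\<exists>g. solution_in A act id g \<Sigma>" by blast
  qed
next
  assume h: "\<forall>\<Sigma>\<in>Ss. \<exists>g. solution_in A act id g \<Sigma>"
  define g where "g \<Sigma> = (SOME g. solution_in A act id g \<Sigma>)" for \<Sigma> :: "(nat,'s,'a) eqn set"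
  have g: "solution_in A act id (g \<Sigma>) \<Sigma>" if "\<Sigma> \<in> Ss" for \<Sigma>
    unfolding g_def using h that by (metis someI_ex)
  define r0 where "r0 z = (case z of Inl a \<Rightarrow> a | Inr ((\<Sigma>, x), t) \<Rightarrow> act (g \<Sigma> x) t)" for z
  let ?X = "ccar A (Omega Ss)" and ?K = "Kap A act Ss"
  have r0X: "r0 z \<in> A" if "z \<in> ?X" for z
  proof (cases z)
    case (Inl a) then show ?thesis using that unfolding r0_def by simp
  next
    case (Inr p)
    then obtain \<Sigma> x t where p: "z = Inr ((\<Sigma>, x), t)" by (metis prod.collapse)
    then have "\<Sigma> \<in> Ss" "x \<in> vars \<Sigma>" using that by auto
    then have "g \<Sigma> x \<in> A" using g unfolding solution_in_def by blast
    then show ?thesis using act p unfolding r0_def is_act_def by simp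
  qed
  have hom: "r0 (cact act z s) = act (r0 z) s" if "z \<in> ?X" for z s
  proof (cases z)
    case (Inl a) then show ?thesis unfolding r0_def by simp
  next
    case (Inr p)
    then obtain \<Sigma> x t where p: "z = Inr ((\<Sigma>, x), t)" by (metis prod.collapse)
    then have "\<Sigma> \<in> Ss" "x \<in> vars \<Sigma>" using that by auto
    then have "g \<Sigma> x \<in> A" using g unfolding solution_in_def by blast
    then show ?thesis using act p unfolding r0_def is_act_def by simp
  qed
  have gen: "r0 p = r0 q" if "(p, q) \<in> gens Ss" for p q
    using that unfolding gens_def
  proof (elim UnE CollectE exE conjE)
    fix \<Sigma> x u y v assume e: "(p, q) = (Inr ((\<Sigma>, x), u), Inr ((\<Sigma>, y), v))" "\<Sigma> \<in> Ss" "EqVV x u y v \<in> \<Sigma>"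
    then show ?thesis using g[OF e(2)] unfolding r0_def solution_in_def solves_def by auto
  next
    fix \<Sigma> x s a assume e: "(p, q) = (Inr ((\<Sigma>, x), s), Inl a)" "\<Sigma> \<in> Ss" "EqVC x s a \<in> \<Sigma>"
    then show ?thesis using g[OF e(2)] unfolding r0_def solution_in_def solves_def by auto
  qed
  have ker: "r0 z = r0 w" if "(z, w) \<in> ?K" for z w
  proof (rule cong_gen_kernel[of ?X "cact act" "gens Ss" r0 act, OF _ gen hom])
    show "cong_gen ?X (cact act) (gens Ss) \<subseteq> ?X \<times> ?X" using Kap_sub[OF act gd] unfolding Kap_def .
    show "(z, w) \<in> cong_gen ?X (cact act) (gens Ss)" using that unfolding Kap_def .
  qed
  define r where "r c = r0 (SOME z. z \<in> c)" for c
  have rc: "r (?K``{x}) = r0 x" if "x \<in> ?X" for x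
  proof -
    have "x \<in> ?K``{x}" using equiv_class_self[OF Kap_equiv[OF act gd] that] .
    then have "(SOME z. z \<in> ?K``{x}) \<in> ?K``{x}" by (rule someI)
    then show ?thesis unfolding r_def using ker by auto
  qed
  have "is_morph (?X // ?K) (quot_act ?K (cact act)) A act r" unfolding is_morph_def
  proof (intro conjI ballI allI)
    fix c s assume "c \<in> ?X // ?K"
    then obtain x where x: "x \<in> ?X" "c = ?K``{x}" by (auto elim: quotientE)
    show "r c \<in> A" using rc x r0X by simp
    show "r (quot_act ?K (cact act) c s) = act (r c) s"
      using rc[OF x(1)] rc[OF cact_closed[OF act x(1)]] Kap_qa[OF act gd x(1)] hom[OF x(1)] x by simp
  qed
  moreover have "\<forall>a\<in>A. r (?K``{Inl a}) = a" using rc unfolding r0_def by simp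
  ultimately show "is_retract A act (?X // ?K) (quot_act ?K (cact act)) (\<lambda>a. ?K``{Inl a})"
    unfolding is_retract_def by blast
qed

end




lemma map_VV: "EqVV x s y t \<in> \<Sigma> \<Longrightarrow> EqVV (\<rho> x) s (\<rho> y) t \<in> map_eqn \<rho> id id ` \<Sigma>"
  by (rule image_eqI[where x = "EqVV x s y t"]) auto
lemma map_VC: "EqVC x s a \<in> \<Sigma> \<Longrightarrow> EqVC (\<rho> x) s a \<in> map_eqn \<rho> id id ` \<Sigma>"
  by (rule image_eqI[where x = "EqVC x s a"]) auto
lemma map_VV_inv: "EqVV x' s y' t \<in> map_eqn \<rho> id id ` \<Sigma> \<Longrightarrow> \<exists>x y. x' = \<rho> x \<and> y' = \<rho> y \<and> EqVV x s y t \<in> \<Sigma>"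
proof -
  assume "EqVV x' s y' t \<in> map_eqn \<rho> id id ` \<Sigma>"
  then obtain e where e: "e \<in> \<Sigma>" "EqVV x' s y' t = map_eqn \<rho> id id e" by blast
  then show ?thesis by (cases e) auto
qed
lemma map_VC_inv: "EqVC x' s a \<in> map_eqn \<rho> id id ` \<Sigma> \<Longrightarrow> \<exists>x. x' = \<rho> x \<and> EqVC x s a \<in> \<Sigma>"
proof -
  assume "EqVC x' s a \<in> map_eqn \<rho> id id ` \<Sigma>"
  then obtain e where e: "e \<in> \<Sigma>" "EqVC x' s a = map_eqn \<rho> id id e" by blast
  then show ?thesis by (cases e) auto
qed

lemma eqn_vars_map: "eqn_vars (map_eqn \<rho> id id e) = \<rho> ` eqn_vars e"
  by (cases e) auto

lemma vars_map: "vars (map_eqn \<rho> id id ` \<Sigma>) = \<rho> ` vars \<Sigma>"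
  unfolding vars_def by (auto simp: eqn_vars_map)

lemma rename_consistent:
  fixes \<Sigma> :: "('v,'s::monoid_mult,'a) eqn set" and \<rho> :: "'v \<Rightarrow> 'w" and act :: "'a \<Rightarrow> 's \<Rightarrow> 'a"
  assumes act: "is_act A act" and c: "consistent A act \<Sigma>" and inj: "inj_on \<rho> (vars \<Sigma>)"
  shows "consistent A act (map_eqn \<rho> id id ` \<Sigma>)"
proof -
  from c obtain B :: "('a + 'v \<times> 's) set" and aB e f where
    B: "is_act B aB" and em: "is_morph A act B aB e" and ei: "inj_on e A" and sol: "solution_in B aB e f \<Sigma>"
    and ov: "eqns_over A \<Sigma>" unfolding consistent_def by blast
  define V where "V = vars \<Sigma>"
  define X' :: "('a + 'w \<times> 's) set" where "X' = Inl ` A \<union> Inr ` (\<rho> ` V \<times> UNIV)"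
  define \<rho>i where "\<rho>i = inv_into V \<rho>"
  have \<rho>i: "\<rho>i (\<rho> x) = x" if "x \<in> V" for x using inj that unfolding \<rho>i_def V_def by simp
  define \<phi> where "\<phi> z = (case z of Inl a \<Rightarrow> e a | Inr (w, t) \<Rightarrow> aB (f (\<rho>i w)) t)" for z
  have \<phi>1: "\<phi> (Inl a) = e a" for a unfolding \<phi>_def by simp
  have \<phi>2: "\<phi> (Inr (\<rho> x, t)) = aB (f x) t" if "x \<in> V" for x t unfolding \<phi>_def using \<rho>i[OF that] by simp
  define P where "P = \<phi> ` X'"
  define R where "R b = (if b \<in> e ` A then Inl (inv_into A e b) else (SOME z. z \<in> X' \<and> \<phi> z = b))" for b
  have fV: "f x \<in> B" if "x \<in> V" for x using sol that unfolding solution_in_def V_def by blast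
  have P1: "b \<in> B" if "b \<in> P" for b
  proof -
    from that obtain z where z: "z \<in> X'" "b = \<phi> z" unfolding P_def by blast
    then show ?thesis
    proof (cases z)
      case (Inl a) then show ?thesis using z em unfolding X'_def is_morph_def by (auto simp: \<phi>1)
    next
      case (Inr p)
      then obtain x t where "z = Inr (\<rho> x, t)" "x \<in> V" using z unfolding X'_def by auto
      then show ?thesis using z B fV unfolding is_act_def by (auto simp: \<phi>2)
    qed
  qed
  have P2: "aB b s \<in> P" if "b \<in> P" for b s
  proof -
    from that obtain z where z: "z \<in> X'" "b = \<phi> z" unfolding P_def by blast
    then show ?thesis
    proof (cases z)
      case (Inl a)
      then have a: "a \<in> A" using z unfolding X'_def by auto
      have "aB b s = \<phi> (Inl (act a s))" using em a z Inl unfolding is_morph_def by (simp add: \<phi>1)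
      moreover have "Inl (act a s) \<in> X'" using act a unfolding X'_def is_act_def by auto
      ultimately show ?thesis unfolding P_def by blast
    next
      case (Inr p)
      then obtain x t where xt: "z = Inr (\<rho> x, t)" "x \<in> V" using z unfolding X'_def by auto
      have "aB b s = aB (f x) (t * s)" using xt z B fV[OF xt(2)] unfolding is_act_def by (simp add: \<phi>2)
      also have "\<dots> = \<phi> (Inr (\<rho> x, t * s))" using \<phi>2[OF xt(2)] by simp
      finally show ?thesis using xt(2) unfolding P_def X'_def by auto
    qed
  qed
  have P3: "R b \<in> X' \<and> \<phi> (R b) = b" if "b \<in> P" for b
  proof (cases "b \<in> e ` A")
    case True
    then obtain a where a: "a \<in> A" "b = e a" by blast
    then have "R b = Inl a" unfolding R_def using ei by (simp add: inv_into_f_f)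
    then show ?thesis using a unfolding X'_def by (simp add: \<phi>1)
  next
    case False
    have "\<exists>z. z \<in> X' \<and> \<phi> z = b" using that unfolding P_def by blast
    then have "(SOME z. z \<in> X' \<and> \<phi> z = b) \<in> X' \<and> \<phi> (SOME z. z \<in> X' \<and> \<phi> z = b) = b" by (rule someI_ex)
    then show ?thesis using False unfolding R_def by simp
  qed
  have P4: "e a \<in> P" "R (e a) = Inl a" if "a \<in> A" for a
  proof -
    show "e a \<in> P" using that unfolding P_def X'_def by (auto simp: \<phi>1[symmetric])
    show "R (e a) = Inl a" unfolding R_def using ei that by (simp add: inv_into_f_f)
  qed
  have P5: "f x \<in> P" if "x \<in> V" for x
  proof -
    have "f x = aB (f x) 1" using B fV[OF that] unfolding is_act_def by simp
    also have "\<dots> = \<phi> (Inr (\<rho> x, 1))" using \<phi>2[OF that] by simp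
    finally show ?thesis using that unfolding P_def X'_def by auto
  qed
  define B' where "B' = R ` P"
  define aB' where "aB' z s = R (aB (\<phi> z) s)" for z s
  define f' where "f' w = R (f (\<rho>i w))" for w
  have isact: "is_act B' aB'" unfolding is_act_def
  proof (intro conjI ballI allI)
    fix z s assume "z \<in> B'"
    then obtain b where b: "b \<in> P" "z = R b" unfolding B'_def by blast
    show "aB' z s \<in> B'" using P3[OF b(1)] P2[OF b(1)] b unfolding aB'_def B'_def by simp
  next
    fix z assume "z \<in> B'"
    then obtain b where b: "b \<in> P" "z = R b" unfolding B'_def by blast
    show "aB' z 1 = z" using P3[OF b(1)] P1[OF b(1)] b B unfolding aB'_def is_act_def by simp
  next
    fix z s t assume "z \<in> B'"
    then obtain b where b: "b \<in> P" "z = R b" unfolding B'_def by blast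
    show "aB' z (s * t) = aB' (aB' z s) t"
      using P3[OF b(1)] P3[OF P2[OF b(1)]] P1[OF b(1)] b B unfolding aB'_def is_act_def by simp
  qed
  have ismorph: "is_morph A act B' aB' Inl" unfolding is_morph_def
  proof (intro conjI ballI allI)
    fix a assume a: "a \<in> A"
    show "Inl a \<in> B'" using P4[OF a] unfolding B'_def by (metis imageI)
    fix s
    have as: "act a s \<in> A" using act a unfolding is_act_def by blast
    have "aB (e a) s = e (act a s)" using em a unfolding is_morph_def by simp
    then show "Inl (act a s) = aB' (Inl a) s" unfolding aB'_def using P4[OF as] by (simp add: \<phi>1)
  qed
  have solv: "solution_in B' aB' Inl f' (map_eqn \<rho> id id ` \<Sigma>)" unfolding solution_in_def solves_def
  proof (intro conjI ballI allI impI)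
    fix w assume "w \<in> vars (map_eqn \<rho> id id ` \<Sigma>)"
    then have "w \<in> \<rho> ` V" unfolding vars_map V_def .
    then obtain x where x: "w = \<rho> x" "x \<in> V" by (rule imageE)
    have "f' w = R (f x)" unfolding f'_def using x \<rho>i by simp
    then show "f' w \<in> B'" using P5[OF x(2)] unfolding B'_def by simp
  next
    fix x' s y' t assume "EqVV x' s y' t \<in> map_eqn \<rho> id id ` \<Sigma>"
    from map_VV_inv[OF this] obtain x y where e: "x' = \<rho> x" "y' = \<rho> y" "EqVV x s y t \<in> \<Sigma>" by (elim exE conjE)
    have xy: "x \<in> V" "y \<in> V" using vars_mem(1)[OF e(3)] unfolding V_def by auto
    have "aB (f x) s = aB (f y) t" using sol e(3) unfolding solution_in_def solves_def by blast
    then show "aB' (f' x') s = aB' (f' y') t"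
      using e xy \<rho>i P3[OF P5[OF xy(1)]] P3[OF P5[OF xy(2)]] unfolding aB'_def f'_def by simp
  next
    fix x' s a assume "EqVC x' s a \<in> map_eqn \<rho> id id ` \<Sigma>"
    from map_VC_inv[OF this] obtain x where e: "x' = \<rho> x" "EqVC x s a \<in> \<Sigma>" by (elim exE conjE)
    have x: "x \<in> V" using vars_mem(2)[OF e(2)] unfolding V_def by auto
    have a: "a \<in> A" using ov e(2) unfolding eqns_over_def by blast
    have "aB (f x) s = e a" using sol e(2) unfolding solution_in_def solves_def by blast
    then show "aB' (f' x') s = Inl a"
      using e x \<rho>i P3[OF P5[OF x]] P4[OF a] unfolding aB'_def f'_def by simp
  qed
  have eo: "eqns_over A (map_eqn \<rho> id id ` \<Sigma>)" unfolding eqns_over_def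
  proof (intro allI impI)
    fix x s a assume h: "EqVC x s a \<in> map_eqn \<rho> id id ` \<Sigma>"
    from map_VC_inv[OF h] obtain y where "EqVC y s a \<in> \<Sigma>" by (elim exE conjE)
    then show "a \<in> A" using ov unfolding eqns_over_def by blast
  qed
  have injI: "inj_on Inl A" by (simp add: inj_on_def)
  show ?thesis unfolding consistent_def
    by (rule conjI[OF eo], rule exI[of _ B'], rule exI[of _ aB'], rule exI[of _ Inl], rule exI[of _ f'])
       (intro conjI isact ismorph solv injI)
qed




lemma finite_vars:
  fixes \<Sigma> :: "('v,'s,'a) eqn set"
  assumes "finite \<Sigma>" shows "finite (vars \<Sigma>)"
proof -
  have h: "finite (eqn_vars e)" for e :: "('v,'s,'a) eqn" by (cases e) auto
  show ?thesis unfolding vars_def using assms h by simp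
qed

lemma vars_empty:
  fixes \<Sigma> :: "('v,'s,'a) eqn set"
  assumes "vars \<Sigma> = {}" shows "\<Sigma> = {}"
proof (rule ccontr)
  assume "\<Sigma> \<noteq> {}"
  then obtain e where e: "e \<in> \<Sigma>" by blast
  have "eqn_vars e \<noteq> {}" by (cases e) auto
  moreover have "eqn_vars e \<subseteq> vars \<Sigma>" using e unfolding vars_def by (rule UN_upper)
  ultimately show False using assms by simp
qed

lemma sol_empty: "solution_in B aB e f {}"
  unfolding solution_in_def solves_def vars_def by simp

lemma sol_unmap:
  assumes "solution_in B aB e f (map_eqn \<rho> id id ` \<Sigma>)"
  shows "solution_in B aB e (f \<circ> \<rho>) \<Sigma>"
  using assms map_VV[of _ _ _ _ \<Sigma> \<rho>] map_VC[of _ _ _ \<Sigma> \<rho>] unfolding solution_in_def solves_def vars_map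
  by auto

context
  fixes A :: "'a set" and act :: "'a \<Rightarrow> 's::monoid_mult \<Rightarrow> 'a"
begin

lemma good_sysn: "good A act (sysn A act n)"
  unfolding good_def sysn_def Theta_def by auto
lemma good_sysinf: "good A act (sysinf A act)"
  unfolding good_def sysinf_def Theta_def by auto
lemma sysn_mono: "i \<le> j \<Longrightarrow> sysn A act i \<subseteq> sysn A act j"
  unfolding sysn_def by (rule UN_mono) auto
lemma sysn_inf: "sysn A act n \<subseteq> sysinf A act"
  unfolding sysn_def sysinf_def by auto
lemma in_sysn: "finite \<Sigma> \<Longrightarrow> consistent A act \<Sigma> \<Longrightarrow> vars \<Sigma> \<noteq> {} \<Longrightarrow> card (vars \<Sigma>) \<le> n \<Longrightarrow> \<Sigma> \<in> sysn A act n"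
  unfolding sysn_def Theta_def using finite_vars[of \<Sigma>] card_gt_0_iff[of "vars \<Sigma>"]
  by (auto intro!: bexI[where x = "card (vars \<Sigma>)"])
lemma sysinf_D: "\<Sigma> \<in> sysinf A act \<Longrightarrow> finite \<Sigma> \<and> consistent A act \<Sigma>"
  unfolding sysinf_def Theta_def by auto
lemma sysn_D: "\<Sigma> \<in> sysn A act n \<Longrightarrow> finite \<Sigma> \<and> consistent A act \<Sigma> \<and> card (vars \<Sigma>) \<le> n"
  unfolding sysn_def Theta_def by auto
lemma in_sysinf: "finite \<Sigma> \<Longrightarrow> consistent A act \<Sigma> \<Longrightarrow> \<Sigma> \<in> sysinf A act"
  unfolding sysinf_def Theta_def by auto

lemma ccar_cover: "x \<in> ccar A (Omega (sysinf A act)) \<Longrightarrow> \<exists>n. x \<in> ccar A (Omega (sysn A act n))"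
proof -
  assume x: "x \<in> ccar A (Omega (sysinf A act))"
  show ?thesis
  proof (cases x)
    case (Inl a) then show ?thesis using x by auto
  next
    case (Inr p)
    then obtain \<Sigma> y t where p: "x = Inr ((\<Sigma>, y), t)" by (metis prod.collapse)
    then have \<Sigma>: "\<Sigma> \<in> sysinf A act" "y \<in> vars \<Sigma>" using x by auto
    then have "\<Sigma> \<in> sysn A act (card (vars \<Sigma>))" using sysinf_D[OF \<Sigma>(1)] by (intro in_sysn) auto
    then show ?thesis using p \<Sigma> by auto
  qed
qed

end




theorem mainTheorem15:
  fixes A :: "'a set" and act :: "'a \<Rightarrow> 's::monoid_mult \<Rightarrow> 'a"
  assumes "is_act A act"
  shows
    \<comment> \<open>(a) embeddings and natural identifications\<close>
    "((\<forall>n. is_act (A1n_car A act n) (A1n_act A act n)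
           \<and> is_morph A act (A1n_car A act n) (A1n_act A act n) (embn A act n)
           \<and> inj_on (embn A act n) A)
      \<and> is_act (A1inf_car A act) (A1inf_act A act)
      \<and> is_morph A act (A1inf_car A act) (A1inf_act A act) (embinf A act)
      \<and> inj_on (embinf A act) A
      \<and> (\<forall>i j. i \<le> j \<longrightarrow>
           is_morph (A1n_car A act i) (A1n_act A act i) (A1n_car A act j) (A1n_act A act j) (iota A act j)
         \<and> inj_on (iota A act j) (A1n_car A act i)
         \<and> (\<forall>a\<in>A. iota A act j (embn A act i a) = embn A act j a))
      \<and> (\<forall>i j k. i \<le> j \<and> j \<le> k \<longrightarrow>
           (\<forall>c\<in>A1n_car A act i. iota A act k (iota A act j c) = iota A act k c))
      \<and> (\<forall>n. is_morph (A1n_car A act n) (A1n_act A act n) (A1inf_car A act) (A1inf_act A act) (iotainf A act)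
         \<and> inj_on (iotainf A act) (A1n_car A act n)
         \<and> (\<forall>a\<in>A. iotainf A act (embn A act n a) = embinf A act a))
      \<and> (\<forall>i j. i \<le> j \<longrightarrow>
           (\<forall>c\<in>A1n_car A act i. iotainf A act (iota A act j c) = iotainf A act c))
      \<and> A1inf_car A act = (\<Union>n. iotainf A act ` A1n_car A act n))
   \<comment> \<open>(b) solutions in A^m_1, A^n_1 (n \<ge> m), A^{\<aleph>0}_1\<close>
   \<and> (\<forall>(\<Sigma> :: ('v, 's, 'a) eqn set) m. finite \<Sigma> \<and> consistent A act \<Sigma> \<and> card (vars \<Sigma>) = m \<longrightarrow>
        (\<forall>n\<ge>m. \<exists>f. solution_in (A1n_car A act n) (A1n_act A act n) (embn A act n) f \<Sigma>)
      \<and> (\<exists>f. solution_in (A1inf_car A act) (A1inf_act A act) (embinf A act) f \<Sigma>))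
   \<comment> \<open>(c) characterisation of (n-)absolute purity\<close>
   \<and> (\<forall>n. n_abs_pure A act n \<longleftrightarrow> is_retract A act (A1n_car A act n) (A1n_act A act n) (embn A act n))
   \<and> (abs_pure A act \<longleftrightarrow> is_retract A act (A1inf_car A act) (A1inf_act A act) (embinf A act))"
proof -
  note act = assms
  have kn: "kappan A act n = Kap A act (sysn A act n)" for n by (simp add: kappan_def Kap_def)
  have ki: "kappainf A act = Kap A act (sysinf A act)" by (simp add: kappainf_def Kap_def)
  have carn: "A1n_car A act n = ccar A (Omega (sysn A act n)) // Kap A act (sysn A act n)" for n
    by (simp add: A1n_car_def kn)
  have actn: "A1n_act A act n = quot_act (Kap A act (sysn A act n)) (cact act)" for n
    by (simp add: A1n_act_def kn)
  have embn: "embn A act n = (\<lambda>a. Kap A act (sysn A act n)``{Inl a})" for n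
    by (simp add: embn_def kn fun_eq_iff)
  have iotan: "iota A act j = (\<lambda>c. Kap A act (sysn A act j)``c)" for j
    by (simp add: iota_def kn fun_eq_iff)
  have cari: "A1inf_car A act = ccar A (Omega (sysinf A act)) // Kap A act (sysinf A act)"
    by (simp add: A1inf_car_def ki)
  have acti: "A1inf_act A act = quot_act (Kap A act (sysinf A act)) (cact act)"
    by (simp add: A1inf_act_def ki)
  have embi: "embinf A act = (\<lambda>a. Kap A act (sysinf A act)``{Inl a})"
    by (simp add: embinf_def ki fun_eq_iff)
  have iotai: "iotainf A act = (\<lambda>c. Kap A act (sysinf A act)``c)"
    by (simp add: iotainf_def ki fun_eq_iff)
  note G = good_sysn[of A act] good_sysinf[of A act]
  have partA: "((\<forall>n. is_act (A1n_car A act n) (A1n_act A act n)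
           \<and> is_morph A act (A1n_car A act n) (A1n_act A act n) (embn A act n)
           \<and> inj_on (embn A act n) A)
      \<and> is_act (A1inf_car A act) (A1inf_act A act)
      \<and> is_morph A act (A1inf_car A act) (A1inf_act A act) (embinf A act)
      \<and> inj_on (embinf A act) A
      \<and> (\<forall>i j. i \<le> j \<longrightarrow>
           is_morph (A1n_car A act i) (A1n_act A act i) (A1n_car A act j) (A1n_act A act j) (iota A act j)
         \<and> inj_on (iota A act j) (A1n_car A act i)
         \<and> (\<forall>a\<in>A. iota A act j (embn A act i a) = embn A act j a))
      \<and> (\<forall>i j k. i \<le> j \<and> j \<le> k \<longrightarrow>
           (\<forall>c\<in>A1n_car A act i. iota A act k (iota A act j c) = iota A act k c))
      \<and> (\<forall>n. is_morph (A1n_car A act n) (A1n_act A act n) (A1inf_car A act) (A1inf_act A act) (iotainf A act)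
         \<and> inj_on (iotainf A act) (A1n_car A act n)
         \<and> (\<forall>a\<in>A. iotainf A act (embn A act n a) = embinf A act a))
      \<and> (\<forall>i j. i \<le> j \<longrightarrow>
           (\<forall>c\<in>A1n_car A act i. iotainf A act (iota A act j c) = iotainf A act c))
      \<and> A1inf_car A act = (\<Union>n. iotainf A act ` A1n_car A act n))"
    unfolding carn actn embn iotan cari acti embi iotai
  proof (intro conjI allI impI ballI)
    fix n
    show "is_act (ccar A (Omega (sysn A act n)) // Kap A act (sysn A act n)) (quot_act (Kap A act (sysn A act n)) (cact act))"
      by (rule quot_is_act[OF act G(1)])
    show "is_morph A act (ccar A (Omega (sysn A act n)) // Kap A act (sysn A act n)) (quot_act (Kap A act (sysn A act n)) (cact act))
     (\<lambda>a. Kap A act (sysn A act n)``{Inl a})" by (rule emb_morph[OF act G(1)])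
    show "inj_on (\<lambda>a. Kap A act (sysn A act n)``{Inl a}) A" by (rule emb_inj[OF act G(1)])
  next
    show "is_act (ccar A (Omega (sysinf A act)) // Kap A act (sysinf A act)) (quot_act (Kap A act (sysinf A act)) (cact act))"
      by (rule quot_is_act[OF act G(2)])
    show "is_morph A act (ccar A (Omega (sysinf A act)) // Kap A act (sysinf A act)) (quot_act (Kap A act (sysinf A act)) (cact act))
     (\<lambda>a. Kap A act (sysinf A act)``{Inl a})" by (rule emb_morph[OF act G(2)])
    show "inj_on (\<lambda>a. Kap A act (sysinf A act)``{Inl a}) A" by (rule emb_inj[OF act G(2)])
  next
    fix i j :: nat assume ij: "i \<le> j"
    note ip = iota_props[OF act G(1) sysn_mono[OF ij]]
    show "is_morph (ccar A (Omega (sysn A act i)) // Kap A act (sysn A act i)) (quot_act (Kap A act (sysn A act i)) (cact act))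
          (ccar A (Omega (sysn A act j)) // Kap A act (sysn A act j)) (quot_act (Kap A act (sysn A act j)) (cact act))
          (\<lambda>c. Kap A act (sysn A act j)``c)" by (rule ip(1))
    show "inj_on (\<lambda>c. Kap A act (sysn A act j)``c) (ccar A (Omega (sysn A act i)) // Kap A act (sysn A act i))" by (rule ip(2))
    fix a assume "a \<in> A"
    then show "Kap A act (sysn A act j)``(Kap A act (sysn A act i)``{Inl a}) = Kap A act (sysn A act j)``{Inl a}"
      using ip(3) by blast
  next
    fix i j k :: nat and c assume ijk: "i \<le> j \<and> j \<le> k" and c: "c \<in> ccar A (Omega (sysn A act i)) // Kap A act (sysn A act i)"
    show "Kap A act (sysn A act k)``(Kap A act (sysn A act j)``c) = Kap A act (sysn A act k)``c"
      using iota_comp[OF act G(1) sysn_mono sysn_mono c] ijk by blast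
  next
    fix n
    note ip = iota_props[OF act G(2) sysn_inf[of A act n]]
    show "is_morph (ccar A (Omega (sysn A act n)) // Kap A act (sysn A act n)) (quot_act (Kap A act (sysn A act n)) (cact act))
          (ccar A (Omega (sysinf A act)) // Kap A act (sysinf A act)) (quot_act (Kap A act (sysinf A act)) (cact act))
          (\<lambda>c. Kap A act (sysinf A act)``c)" by (rule ip(1))
    show "inj_on (\<lambda>c. Kap A act (sysinf A act)``c) (ccar A (Omega (sysn A act n)) // Kap A act (sysn A act n))" by (rule ip(2))
    fix a assume "a \<in> A"
    then show "Kap A act (sysinf A act)``(Kap A act (sysn A act n)``{Inl a}) = Kap A act (sysinf A act)``{Inl a}"
      using ip(3) by blast
  next
    fix i j :: nat and c assume ij: "i \<le> j" and c: "c \<in> ccar A (Omega (sysn A act i)) // Kap A act (sysn A act i)"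
    show "Kap A act (sysinf A act)``(Kap A act (sysn A act j)``c) = Kap A act (sysinf A act)``c"
      by (rule iota_comp[OF act G(2) sysn_mono[OF ij] sysn_inf c])
  next
    show "ccar A (Omega (sysinf A act)) // Kap A act (sysinf A act) =
      (\<Union>n. (\<lambda>c. Kap A act (sysinf A act)``c) ` (ccar A (Omega (sysn A act n)) // Kap A act (sysn A act n)))"
    proof
      show "(\<Union>n. (\<lambda>c. Kap A act (sysinf A act)``c) ` (ccar A (Omega (sysn A act n)) // Kap A act (sysn A act n)))
         \<subseteq> ccar A (Omega (sysinf A act)) // Kap A act (sysinf A act)"
        using iota_props(1)[OF act G(2) sysn_inf] unfolding is_morph_def by blast
    next
      show "ccar A (Omega (sysinf A act)) // Kap A act (sysinf A act) \<subseteq>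
        (\<Union>n. (\<lambda>c. Kap A act (sysinf A act)``c) ` (ccar A (Omega (sysn A act n)) // Kap A act (sysn A act n)))"
      proof
        fix c assume "c \<in> ccar A (Omega (sysinf A act)) // Kap A act (sysinf A act)"
        then obtain x where x: "x \<in> ccar A (Omega (sysinf A act))" "c = Kap A act (sysinf A act)``{x}"
          by (auto elim: quotientE)
        obtain n where n: "x \<in> ccar A (Omega (sysn A act n))" using ccar_cover[OF x(1)] by blast
        have "c = Kap A act (sysinf A act)``(Kap A act (sysn A act n)``{x})"
          using img_class[OF act G(2) sysn_inf n] x by simp
        moreover have "Kap A act (sysn A act n)``{x} \<in> ccar A (Omega (sysn A act n)) // Kap A act (sysn A act n)"
          using n by (rule quotientI)
        ultimately show "c \<in> (\<Union>n. (\<lambda>c. Kap A act (sysinf A act)``c) ` (ccar A (Omega (sysn A act n)) // Kap A act (sysn A act n)))"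
          by blast
      qed
    qed
  qed
  have partB: "\<forall>(\<Sigma> :: ('v, 's, 'a) eqn set) m. finite \<Sigma> \<and> consistent A act \<Sigma> \<and> card (vars \<Sigma>) = m \<longrightarrow>
        (\<forall>n\<ge>m. \<exists>f. solution_in (A1n_car A act n) (A1n_act A act n) (embn A act n) f \<Sigma>)
      \<and> (\<exists>f. solution_in (A1inf_car A act) (A1inf_act A act) (embinf A act) f \<Sigma>)"
  proof (intro allI impI)
    fix \<Sigma> :: "('v, 's, 'a) eqn set" and m assume h: "finite \<Sigma> \<and> consistent A act \<Sigma> \<and> card (vars \<Sigma>) = m"
    show "(\<forall>n\<ge>m. \<exists>f. solution_in (A1n_car A act n) (A1n_act A act n) (embn A act n) f \<Sigma>)
      \<and> (\<exists>f. solution_in (A1inf_car A act) (A1inf_act A act) (embinf A act) f \<Sigma>)"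
    proof (cases "vars \<Sigma> = {}")
      case True
      then have "\<Sigma> = {}" by (rule vars_empty)
      then show ?thesis using sol_empty by blast
    next
      case False
      obtain \<rho> :: "'v \<Rightarrow> nat" where \<rho>: "inj_on \<rho> (vars \<Sigma>)"
        using finite_imp_inj_to_nat_seg[OF finite_vars[of \<Sigma>]] h by blast
      define \<Sigma>' where "\<Sigma>' = map_eqn \<rho> id id ` \<Sigma>"
      have c': "consistent A act \<Sigma>'" unfolding \<Sigma>'_def using rename_consistent[OF act _ \<rho>] h by blast
      have f': "finite \<Sigma>'" unfolding \<Sigma>'_def using h by simp
      have v': "vars \<Sigma>' = \<rho> ` vars \<Sigma>" unfolding \<Sigma>'_def by (rule vars_map)
      have card': "card (vars \<Sigma>') = m" using v' card_image[OF \<rho>] h by simp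
      have ne': "vars \<Sigma>' \<noteq> {}" using v' False by simp
      have bk: "\<exists>f. solution_in B aB e f \<Sigma>" if "solution_in B aB e g \<Sigma>'" for B aB e g
        using sol_unmap[OF that[unfolded \<Sigma>'_def]] by blast
      show ?thesis
      proof (intro conjI allI impI)
        fix n assume "m \<le> n"
        then have "\<Sigma>' \<in> sysn A act n" using in_sysn[OF f' c' ne'] card' by simp
        from canon_sol[OF act G(1) this] show "\<exists>f. solution_in (A1n_car A act n) (A1n_act A act n) (embn A act n) f \<Sigma>"
          unfolding carn actn embn by (rule bk)
      next
        have "\<Sigma>' \<in> sysinf A act" by (rule in_sysinf[OF f' c'])
        from canon_sol[OF act G(2) this] show "\<exists>f. solution_in (A1inf_car A act) (A1inf_act A act) (embinf A act) f \<Sigma>"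
          unfolding cari acti embi by (rule bk)
      qed
    qed
  qed
  have partC1: "\<forall>n. n_abs_pure A act n \<longleftrightarrow> is_retract A act (A1n_car A act n) (A1n_act A act n) (embn A act n)"
  proof
    fix n
    have "n_abs_pure A act n \<longleftrightarrow> (\<forall>\<Sigma>\<in>sysn A act n. \<exists>g. solution_in A act id g \<Sigma>)"
    proof
      assume "n_abs_pure A act n"
      then show "\<forall>\<Sigma>\<in>sysn A act n. \<exists>g. solution_in A act id g \<Sigma>"
        using sysn_D unfolding n_abs_pure_def by blast
    next
      assume h: "\<forall>\<Sigma>\<in>sysn A act n. \<exists>g. solution_in A act id g \<Sigma>"
      show "n_abs_pure A act n" unfolding n_abs_pure_def
      proof (intro allI impI)
        fix \<Sigma> :: "(nat,'s,'a) eqn set" assume s: "finite \<Sigma> \<and> consistent A act \<Sigma> \<and> card (vars \<Sigma>) \<le> n"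
        show "\<exists>f. solution_in A act id f \<Sigma>"
        proof (cases "vars \<Sigma> = {}")
          case True then show ?thesis using vars_empty sol_empty by blast
        next
          case False then show ?thesis using h in_sysn s by blast
        qed
      qed
    qed
    then show "n_abs_pure A act n \<longleftrightarrow> is_retract A act (A1n_car A act n) (A1n_act A act n) (embn A act n)"
      unfolding carn actn embn using retract_char[OF act G(1)] by simp
  qed
  have partC2: "abs_pure A act \<longleftrightarrow> is_retract A act (A1inf_car A act) (A1inf_act A act) (embinf A act)"
  proof -
    have "abs_pure A act \<longleftrightarrow> (\<forall>\<Sigma>\<in>sysinf A act. \<exists>g. solution_in A act id g \<Sigma>)"
    proof
      assume ap: "abs_pure A act"
      show "\<forall>\<Sigma>\<in>sysinf A act. \<exists>g. solution_in A act id g \<Sigma>"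
      proof
        fix \<Sigma> assume "\<Sigma> \<in> sysinf A act"
        then have "finite \<Sigma> \<and> consistent A act \<Sigma> \<and> card (vars \<Sigma>) \<le> card (vars \<Sigma>)" using sysinf_D by blast
        then show "\<exists>g. solution_in A act id g \<Sigma>" using ap unfolding abs_pure_def n_abs_pure_def by blast
      qed
    next
      assume h: "\<forall>\<Sigma>\<in>sysinf A act. \<exists>g. solution_in A act id g \<Sigma>"
      show "abs_pure A act" unfolding abs_pure_def n_abs_pure_def
        using h in_sysinf by blast
    qed
    then show ?thesis unfolding cari acti embi using retract_char[OF act G(2)] by simp
  qed
  show ?thesis using partA partB partC1 partC2 by blast
qed


end
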